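(* For every $u \in W$, the sequence $\{\nu^k(u)\}_{k \ge 0}$ is descending, i.e. $\nu^{k+1}(u) \subseteq \nu^k(u)$ for all $k \ge 0$, and it stabilizes after finitely many terms.
   Context: $W$ is the Weyl group of a root system $\Pi$ with simple roots $\Delta$ and positive roots $\Pi_+$. $\alpha\le\beta$ iff $\beta-\alpha$ is a nonnegative integer combination of simple roots. For $A\subseteq\Pi_+$, $\mathrm{Adj}(A) = \{\alpha\in\Pi_+ : \exists\beta\in A,\ \alpha\le\beta\}$. For $u\in W$: $\nu^0(u) = u(\Pi_+)\cap\Pi_+$ and $\nu^k(u) = u(\mathrm{Adj}\,\nu^{k-1}(u))\cap\Pi_+$ for $k\ge1$. *)

theory Defs
  imports "HOL-Analysis.Analysis"
begin

definition refl_root :: "'a::euclidean_space \<Rightarrow> 'a \<Rightarrow> 'a" where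
  "refl_root a x = x - (2 * (x \<bullet> a) / (a \<bullet> a)) *\<^sub>R a"

definition root_system :: "'a::euclidean_space set \<Rightarrow> bool" where
  "root_system R \<longleftrightarrow> finite R \<and> 0 \<notin> R \<and> span R = UNIV \<and>
     (\<forall>a\<in>R. \<forall>b\<in>R. refl_root a b \<in> R \<and> 2 * (b \<bullet> a) / (a \<bullet> a) \<in> \<int>) \<and>
     (\<forall>a\<in>R. \<forall>c. c *\<^sub>R a \<in> R \<longrightarrow> c = 1 \<or> c = -1)"

definition nonneg_comb :: "'a::euclidean_space set \<Rightarrow> 'a \<Rightarrow> bool" where
  "nonneg_comb D v \<longleftrightarrow> (\<exists>c::'a \<Rightarrow> nat. v = (\<Sum>d\<in>D. of_nat (c d) *\<^sub>R d))"

definition simple_roots :: "'a::euclidean_space set \<Rightarrow> 'a set \<Rightarrow> bool" where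
  "simple_roots R D \<longleftrightarrow> D \<subseteq> R \<and> independent D \<and>
     (\<forall>b\<in>R. nonneg_comb D b \<or> nonneg_comb D (- b))"

definition pos_roots :: "'a::euclidean_space set \<Rightarrow> 'a set \<Rightarrow> 'a set" where
  "pos_roots R D = {b\<in>R. nonneg_comb D b}"

inductive_set weyl_group :: "'a::euclidean_space set \<Rightarrow> ('a \<Rightarrow> 'a) set" for R where
  id_in: "id \<in> weyl_group R"
| refl_comp: "w \<in> weyl_group R \<Longrightarrow> a \<in> R \<Longrightarrow> refl_root a \<circ> w \<in> weyl_group R"

definition root_le :: "'a::euclidean_space set \<Rightarrow> 'a \<Rightarrow> 'a \<Rightarrow> bool" where
  "root_le D a b \<longleftrightarrow> nonneg_comb D (b - a)"

definition Adj :: "'a::euclidean_space set \<Rightarrow> 'a set \<Rightarrow> 'a set \<Rightarrow> 'a set" where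
  "Adj R D A = {a \<in> pos_roots R D. \<exists>b\<in>A. root_le D a b}"

fun nu :: "'a::euclidean_space set \<Rightarrow> 'a set \<Rightarrow> ('a \<Rightarrow> 'a) \<Rightarrow> nat \<Rightarrow> 'a set" where
  "nu R D u 0 = u ` pos_roots R D \<inter> pos_roots R D"
| "nu R D u (Suc k) = u ` Adj R D (nu R D u k) \<inter> pos_roots R D"

end

theory Submission
  imports Defs
begin

lemma nu_desc: "nu R D u (Suc k) \<subseteq> nu R D u k"
proof (induction k)
  case 0
  show ?case by (auto simp: Adj_def)
next
  case (Suc k)
  have "Adj R D (nu R D u (Suc k)) \<subseteq> Adj R D (nu R D u k)"
    using Suc unfolding Adj_def by blast
  then show ?case by auto
qed

theorem proposition3p2:
  fixes R D :: "'a::euclidean_space set" and u :: "'a \<Rightarrow> 'a"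
  assumes "root_system R" and "simple_roots R D" and "u \<in> weyl_group R"
  shows "(\<forall>k. nu R D u (Suc k) \<subseteq> nu R D u k) \<and>
         (\<exists>N. \<forall>k\<ge>N. nu R D u k = nu R D u N)"
proof -
  have finR: "finite R" using assms(1) by (simp add: root_system_def)
  have fin: "finite (nu R D u k)" for k
  proof -
    have "nu R D u k \<subseteq> pos_roots R D" by (cases k) auto
    moreover have "pos_roots R D \<subseteq> R" by (auto simp: pos_roots_def)
    ultimately show ?thesis using finR finite_subset by blast
  qed
  define m where "m = (LEAST m. \<exists>k. card (nu R D u k) = m)"
  obtain N where N: "card (nu R D u N) = m"
    unfolding m_def by (rule LeastI_ex[where P="\<lambda>m. \<exists>k. card (nu R D u k) = m", THEN exE]) auto
  have "m \<le> card (nu R D u (Suc N))" unfolding m_def by (rule Least_le) (rule exI[of _ "Suc N"], rule refl)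
  hence eq: "nu R D u (Suc N) = nu R D u N"
    using card_subset_eq[OF fin nu_desc] N by (metis card_mono[OF fin nu_desc] le_antisym)
  have "nu R D u k = nu R D u N" if "k \<ge> N" for k
    using that
  proof (induction k rule: dec_induct)
    case base then show ?case by simp
  next
    case (step k)
    have "nu R D u (Suc k) = nu R D u (Suc N)" using step.IH by simp
    then show ?case using eq by simp
  qed
  then show ?thesis using nu_desc by blast
qed

end
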